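(* Assume $g$ satisfies (Hg). Let $a\in(0,1)$ and $k>1$, and define $$d^+(a,k):=\max_{y\in(1-a,1)}\frac{-g(1-y;a)}{ky},\qquad d^*(a,k):=(1-k^{-1/2})^{-2}\,d^+(a,k).$$ Then for every $d>d^*(a,k)$ we have $c(a,d,k)<0$.
   Context: A function $g:\mathbb R\times[0,1]\to\mathbb R$, $(u,a)\mapsto g(u;a)$, satisfies (Hg) if it is $C^1$ and for every $a\in(0,1)$: $g(0;a)=g(a;a)=g(1;a)=0$, $g'(0;a)<0$, $g'(1;a)<0$, $g'(a;a)>0$ (where $g'=\partial_u g$), $g(v;a)>0$ for $v\in(-\infty,0)\cup(a,1)$ and $g(v;a)<0$ for $v\in(0,a)\cup(1,\infty)$. For $k>0$, $a\in(0,1)$, $d>0$ consider the traveling wave problem: find $c\in\mathbb R$ and $\Phi:\mathbb R\to\mathbb R$ with $$-c\Phi'(\xi)=d\big(k\Phi(\xi+1)-(k+1)\Phi(\xi)+\Phi(\xi-1)\big)+g(\Phi(\xi);a)\quad(\xi\in\mathbb R),\qquad \lim_{\xi\to-\infty}\Phi(\xi)=0,\ \lim_{\xi\to+\infty}\Phi(\xi)=1.$$ It is known (Mallet-Paret) that under (Hg) this problem has a solution with $\Phi$ non-decreasing and that the speed $c$ is uniquely determined; it is denoted $c(a,d,k)$. *)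

theory Defs
  imports "HOL-Analysis.Analysis"
begin

text \<open>Hypothesis (Hg). g u a is written g(u;a); the u-derivative is deriv (\<lambda>v. g v a) u.
  C^1 on R x [0,1]: the uncurried map has a Frechet derivative (relative to the closed
  strip) that depends continuously on the point.\<close>
definition Hg :: "(real \<Rightarrow> real \<Rightarrow> real) \<Rightarrow> bool" where
  "Hg g \<longleftrightarrow>
     (\<exists>G :: real \<times> real \<Rightarrow> (real \<times> real) \<Rightarrow>\<^sub>L real.
        (\<forall>p \<in> UNIV \<times> {0..1}. ((\<lambda>q. g (fst q) (snd q)) has_derivative blinfun_apply (G p))
                                 (at p within UNIV \<times> {0..1}))
      \<and> continuous_on (UNIV \<times> {0..1}) G)
   \<and> (\<forall>a \<in> {0<..<1}.
        g 0 a = 0 \<and> g a a = 0 \<and> g 1 a = 0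
      \<and> deriv (\<lambda>v. g v a) 0 < 0 \<and> deriv (\<lambda>v. g v a) 1 < 0 \<and> deriv (\<lambda>v. g v a) a > 0
      \<and> (\<forall>v. (v < 0 \<or> (a < v \<and> v < 1)) \<longrightarrow> g v a > 0)
      \<and> (\<forall>v. ((0 < v \<and> v < a) \<or> 1 < v) \<longrightarrow> g v a < 0))"

definition tw_solution ::
  "(real \<Rightarrow> real \<Rightarrow> real) \<Rightarrow> real \<Rightarrow> real \<Rightarrow> real \<Rightarrow> real \<Rightarrow> (real \<Rightarrow> real) \<Rightarrow> bool" where
  "tw_solution g a d k c \<Phi> \<longleftrightarrow>
     (\<exists>\<Phi>'. \<forall>\<xi>. (\<Phi> has_real_derivative \<Phi>' \<xi>) (at \<xi>) \<and>
        - c * \<Phi>' \<xi> = d * (k * \<Phi> (\<xi> + 1) - (k + 1) * \<Phi> \<xi> + \<Phi> (\<xi> - 1)) + g (\<Phi> \<xi>) a)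
   \<and> (\<Phi> \<longlongrightarrow> 0) at_bot \<and> (\<Phi> \<longlongrightarrow> 1) at_top"

definition d_plus :: "(real \<Rightarrow> real \<Rightarrow> real) \<Rightarrow> real \<Rightarrow> real \<Rightarrow> real" where
  "d_plus g a k = (SUP y \<in> {1 - a<..<1}. - g (1 - y) a / (k * y))"

definition d_star :: "(real \<Rightarrow> real \<Rightarrow> real) \<Rightarrow> real \<Rightarrow> real \<Rightarrow> real" where
  "d_star g a k = d_plus g a k / (1 - 1 / sqrt k) ^ 2"

end

theory Submission
  imports Defs
begin

lemma Hg_cont:
  assumes "Hg g" "0 \<le> a" "a \<le> 1"
  shows "continuous_on UNIV (\<lambda>u. g u a)"
proof -
  from assms(1) obtain G :: "real \<times> real \<Rightarrow> (real \<times> real) \<Rightarrow>\<^sub>L real" where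
    G: "\<forall>p \<in> UNIV \<times> {0..1}. ((\<lambda>q. g (fst q) (snd q)) has_derivative blinfun_apply (G p))
                                 (at p within UNIV \<times> {0..1})"
    unfolding Hg_def by blast
  show ?thesis
  proof (rule continuous_at_imp_continuous_on, intro ballI)
    fix u :: real
    have "continuous (at (u,a) within UNIV \<times> {0..1}) (\<lambda>q. g (fst q) (snd q))"
      using G assms by (intro has_derivative_continuous[of _ "blinfun_apply (G (u,a))"]) auto
    hence c1: "continuous (at ((\<lambda>u. (u,a)) u) within (\<lambda>u. (u,a)) ` UNIV) (\<lambda>q. g (fst q) (snd q))"
      by (rule continuous_within_subset) (use assms in auto)
    have c0: "continuous (at u within UNIV) (\<lambda>u. (u,a))" by (intro continuous_intros)
    show "isCont (\<lambda>u. g u a) u"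
      using continuous_within_compose2[OF c0 c1] by (simp add: o_def)
  qed
qed

lemma mono_deriv_nonneg:
  fixes f :: "real \<Rightarrow> real"
  assumes "mono f" "(f has_real_derivative l) (at x)"
  shows "l \<ge> 0"
proof (rule ccontr)
  assume "\<not> l \<ge> 0"
  then obtain e where "e > 0" "\<forall>h > 0. h < e \<longrightarrow> f x > f (x + h)"
    using DERIV_neg_dec_right[OF assms(2)] by auto
  hence "f x > f (x + e/2)" by auto
  moreover have "f x \<le> f (x + e/2)" using assms(1) \<open>e > 0\<close> by (auto intro: monoD)
  ultimately show False by simp
qed

lemma mono_le_lim:
  fixes f :: "real \<Rightarrow> real"
  assumes "mono f" "(f \<longlongrightarrow> l) at_top"
  shows "f x \<le> l"
proof (rule tendsto_lowerbound[OF assms(2)])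
  show "\<forall>\<^sub>F i in at_top. f x \<le> f i"
    using eventually_ge_at_top[of x] by eventually_elim (use assms(1) in \<open>auto intro: monoD\<close>)
qed simp

lemma mono_ge_lim:
  fixes f :: "real \<Rightarrow> real"
  assumes "mono f" "(f \<longlongrightarrow> l) at_bot"
  shows "l \<le> f x"
proof (rule tendsto_upperbound[OF assms(2)])
  show "\<forall>\<^sub>F i in at_bot. f i \<le> f x"
    using eventually_le_at_bot[of x] by eventually_elim (use assms(1) in \<open>auto intro: monoD\<close>)
qed simp

theorem theorem2p5:
  fixes g :: "real \<Rightarrow> real \<Rightarrow> real" and a k d c :: real and \<Phi> :: "real \<Rightarrow> real"
  assumes "Hg g" and "0 < a" and "a < 1" and "k > 1" and "d > d_star g a k"
    and "mono \<Phi>" and "tw_solution g a d k c \<Phi>"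
  shows "c < 0"
proof (rule ccontr)
  assume "\<not> c < 0"
  hence c0: "c \<ge> 0" by simp
  obtain \<Phi>' where der: "\<And>\<xi>. (\<Phi> has_real_derivative \<Phi>' \<xi>) (at \<xi>)"
    and eq: "\<And>\<xi>. - c * \<Phi>' \<xi> = d * (k * \<Phi> (\<xi> + 1) - (k + 1) * \<Phi> \<xi> + \<Phi> (\<xi> - 1)) + g (\<Phi> \<xi>) a"
    and lim0: "(\<Phi> \<longlongrightarrow> 0) at_bot" and lim1: "(\<Phi> \<longlongrightarrow> 1) at_top"
    using assms(7) unfolding tw_solution_def by blast
  have Pd: "\<Phi>' \<xi> \<ge> 0" for \<xi> using mono_deriv_nonneg[OF assms(6) der] .
  have P0: "0 \<le> \<Phi> \<xi>" for \<xi> using mono_ge_lim[OF assms(6) lim0] .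
  have P1: "\<Phi> \<xi> \<le> 1" for \<xi> using mono_le_lim[OF assms(6) lim1] .
  have key0: "d * (k * \<Phi> (\<xi> + 1) - (k + 1) * \<Phi> \<xi> + \<Phi> (\<xi> - 1)) + g (\<Phi> \<xi>) a \<le> 0" for \<xi>
  proof -
    have "0 \<le> c * \<Phi>' \<xi>" using c0 Pd[of \<xi>] by simp
    thus ?thesis using eq[of \<xi>] by linarith
  qed
  have ga: "g 0 a = 0 \<and> g a a = 0 \<and> g 1 a = 0
      \<and> (\<forall>v. (v < 0 \<or> (a < v \<and> v < 1)) \<longrightarrow> g v a > 0)
      \<and> (\<forall>v. ((0 < v \<and> v < a) \<or> 1 < v) \<longrightarrow> g v a < 0)"
    using assms(1-3) unfolding Hg_def by auto
  have g0: "g 0 a = 0" and gaa: "g a a = 0" and g1: "g 1 a = 0" using ga by auto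
  have gpos: "\<And>v. a < v \<Longrightarrow> v < 1 \<Longrightarrow> g v a > 0" using ga by blast
  have gneg: "\<And>v. 0 < v \<Longrightarrow> v < a \<Longrightarrow> g v a < 0" using ga by blast
  define H where "H = (\<lambda>y. - g (1 - y) a / (k * y))"
  have cg: "continuous_on {0..1::real} (\<lambda>u. g u a)"
    by (rule continuous_on_subset[OF Hg_cont[OF assms(1)]]) (use assms(2,3) in auto)
  obtain B where B: "B \<ge> 0" "\<And>u. u \<in> {0..1} \<Longrightarrow> norm (g u a) \<le> B"
    by (rule continuous_on_compact_bound[OF compact_Icc cg]) auto
  have Hb: "H y \<le> B / (k * (1 - a))" if "y \<in> {1-a<..<1}" for y
  proof -
    have y: "1 - a < y" "y < 1" using that by auto
    have "- g (1 - y) a \<le> B" using B(2)[of "1 - y"] y assms(2,3) by auto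
    hence "H y \<le> B / (k * y)" unfolding H_def
      using y assms(3,4) by (intro divide_right_mono) auto
    also have "\<dots> \<le> B / (k * (1 - a))"
      using y assms(3,4) B(1) by (intro divide_left_mono mult_left_mono mult_pos_pos) auto
    finally show ?thesis .
  qed
  have bdd: "bdd_above (H ` {1-a<..<1})"
    using Hb by (intro bdd_aboveI2) auto
  have Hle: "H y \<le> d_plus g a k" if "y \<in> {1-a<..<1}" for y
    unfolding d_plus_def H_def[symmetric] using bdd that by (rule cSUP_upper2) auto
  have dp_pos: "d_plus g a k > 0"
  proof -
    have "g (a/2) a < 0" using gneg[of "a/2"] assms(2) by auto
    moreover have "1 - (1 - a/2) = a/2" by simp
    ultimately have "H (1 - a/2) > 0" unfolding H_def using assms(2-4)
      by (intro divide_pos_pos) auto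
    moreover have "1 - a/2 \<in> {1-a<..<1}" using assms(2) by auto
    ultimately show ?thesis using Hle by fastforce
  qed
  define s where "s = sqrt k"
  have s1: "s > 1" unfolding s_def using assms(4) by simp
  have ss: "s * s = k" unfolding s_def using assms(4) by simp
  have q_pos: "(1 - 1/s)^2 > 0" using s1 by simp
  have dpos: "d > 0"
  proof -
    have "d_star g a k > 0" unfolding d_star_def s_def[symmetric] using dp_pos q_pos by simp
    thus ?thesis using assms(5) by simp
  qed
  have dp_lt: "d_plus g a k / d < (1 - 1/s)^2"
    using assms(5) q_pos dpos unfolding d_star_def s_def[symmetric]
    by (simp add: pos_divide_less_eq mult.commute)
  define y where "y = (\<lambda>\<xi>. 1 - \<Phi> \<xi>)"
  have y0: "y \<xi> \<ge> 0" for \<xi> using P1[of \<xi>] unfolding y_def by simp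
  define \<beta> where "\<beta> = k + 1 - k * (d_plus g a k / d)"
  have kq: "k * (1 - 1/s)^2 = k + 1 - 2 * s"
    unfolding ss[symmetric] using s1 by (simp add: power2_eq_square field_simps)
  have \<beta>_gt: "\<beta> > 2 * s"
  proof -
    have "k * (d_plus g a k / d) < k * (1 - 1/s)^2"
      using mult_strict_left_mono[OF dp_lt, of k] assms(4) by simp
    thus ?thesis unfolding \<beta>_def kq by simp
  qed
  have gineq: "g (\<Phi> \<xi>) a \<ge> - (k * d_plus g a k) * y \<xi>" for \<xi>
  proof (cases "0 < \<Phi> \<xi> \<and> \<Phi> \<xi> < a")
    case True
    hence yin: "y \<xi> \<in> {1-a<..<1}" unfolding y_def by auto
    have "H (y \<xi>) \<le> d_plus g a k" using Hle[OF yin] .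
    moreover have "k * y \<xi> > 0" using yin assms(2-4) by auto
    ultimately have "- g (1 - y \<xi>) a \<le> d_plus g a k * (k * y \<xi>)"
      unfolding H_def by (simp add: pos_divide_le_eq del: divide_minus_left)
    moreover have "1 - y \<xi> = \<Phi> \<xi>" unfolding y_def by simp
    ultimately show ?thesis by (simp add: algebra_simps)
  next
    case False
    have "g (\<Phi> \<xi>) a \<ge> 0"
    proof -
      consider "\<Phi> \<xi> = 0" | "\<Phi> \<xi> = a" | "a < \<Phi> \<xi> \<and> \<Phi> \<xi> < 1" | "\<Phi> \<xi> = 1"
        using False P0[of \<xi>] P1[of \<xi>] by fastforce
      thus ?thesis
      proof cases
        case 3
        thus ?thesis using gpos[of "\<Phi> \<xi>"] by simp
      qed (simp_all add: g0 gaa g1)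
    qed
    moreover have "(k * d_plus g a k) * y \<xi> \<ge> 0" using dp_pos assms(4) y0[of \<xi>] by simp
    ultimately show ?thesis by (simp only: mult_minus_left)
  qed
  have main: "\<beta> * y \<xi> \<le> k * y (\<xi> + 1) + y (\<xi> - 1)" for \<xi>
  proof -
    have "d * ((k + 1) * y \<xi> - k * y (\<xi> + 1) - y (\<xi> - 1)) \<le> (k * d_plus g a k) * y \<xi>"
      using key0[of \<xi>] gineq[of \<xi>] unfolding y_def by (simp add: algebra_simps)
    hence "(k + 1) * y \<xi> - k * y (\<xi> + 1) - y (\<xi> - 1) \<le> (k * d_plus g a k) * y \<xi> / d"
      using dpos by (simp add: pos_le_divide_eq mult.commute)
    thus ?thesis unfolding \<beta>_def by (simp add: algebra_simps)
  qed
  obtain \<xi>a where \<xi>a: "\<And>\<xi>. \<xi> \<ge> \<xi>a \<Longrightarrow> \<Phi> \<xi> > a"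
    using order_tendstoD(1)[OF lim1 assms(3)] unfolding eventually_at_top_linorder by blast
  have step: "k * (y \<xi> - y (\<xi> + 1)) \<le> y (\<xi> - 1) - y \<xi>" if "\<xi> \<ge> \<xi>a" for \<xi>
  proof -
    have "g (\<Phi> \<xi>) a \<ge> 0"
    proof (cases "\<Phi> \<xi> = 1")
      case True thus ?thesis using g1 by simp
    next
      case False thus ?thesis using gpos[of "\<Phi> \<xi>"] \<xi>a[OF that] P1[of \<xi>] by simp
    qed
    hence "d * (k * \<Phi> (\<xi> + 1) - (k + 1) * \<Phi> \<xi> + \<Phi> (\<xi> - 1)) \<le> 0" using key0[of \<xi>] by linarith
    hence "k * \<Phi> (\<xi> + 1) - (k + 1) * \<Phi> \<xi> + \<Phi> (\<xi> - 1) \<le> 0" using dpos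
      by (simp add: mult_le_0_iff)
    thus ?thesis unfolding y_def by (simp add: algebra_simps)
  qed
  have tele: "k * (y \<xi> - y (\<xi> + real m)) \<le> y (\<xi> - 1) - y (\<xi> + real m - 1)" if "\<xi> \<ge> \<xi>a" for \<xi> m
  proof (induction m)
    case 0 thus ?case by simp
  next
    case (Suc m)
    have "k * (y (\<xi> + real m) - y (\<xi> + real m + 1)) \<le> y (\<xi> + real m - 1) - y (\<xi> + real m)"
      using step[of "\<xi> + real m"] that by simp
    moreover have "\<xi> + real (Suc m) = \<xi> + real m + 1" by simp
    moreover have "\<xi> + real (Suc m) - 1 = \<xi> + real m" by simp
    ultimately show ?case using Suc.IH by (simp only:) (simp add: algebra_simps)
  qed
  have ydec: "k * y \<xi> \<le> y (\<xi> - 1)" if "\<xi> \<ge> \<xi>a" for \<xi>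
  proof (rule field_le_epsilon)
    fix e :: real assume "e > 0"
    hence "e / k > 0" using assms(4) by simp
    have "1 - e / k < 1" using \<open>e / k > 0\<close> by simp
    then obtain X where X: "\<And>x. x \<ge> X \<Longrightarrow> \<Phi> x > 1 - e / k"
      using order_tendstoD(1)[OF lim1] unfolding eventually_at_top_linorder by blast
    define m where "m = nat \<lceil>X - \<xi>\<rceil>"
    have "\<xi> + real m \<ge> X" unfolding m_def by linarith
    hence "y (\<xi> + real m) < e / k" using X unfolding y_def by fastforce
    hence "k * y (\<xi> + real m) \<le> e" using assms(4) by (simp add: pos_less_divide_eq mult.commute)
    moreover have "y (\<xi> + real m - 1) \<ge> 0" using y0 .
    ultimately show "k * y \<xi> \<le> y (\<xi> - 1) + e" using tele[OF that, of m]
      by (simp add: algebra_simps)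
  qed
  define w where "w = (\<lambda>\<xi>. y \<xi> * s powr \<xi>)"
  have w0: "w \<xi> \<ge> 0" for \<xi> unfolding w_def using y0 by simp
  have spow: "s powr (\<xi> + 1) = s powr \<xi> * s" for \<xi>
    using s1 by (simp add: powr_add)
  have wstep: "w \<xi> \<le> w (\<xi> - 1)" if "\<xi> \<ge> \<xi>a" for \<xi>
  proof -
    have e1: "s powr \<xi> = s powr (\<xi> - 1) * s" using spow[of "\<xi> - 1"] by simp
    have "k * w \<xi> = y (\<xi> - 1) * s powr (\<xi> - 1) * s * (k * y \<xi> / y (\<xi> - 1))" if "y (\<xi> - 1) \<noteq> 0"
      using that unfolding w_def e1 by simp
    have "s * (k * w \<xi>) = s * (k * y \<xi>) * s powr (\<xi> - 1) * s"
      unfolding w_def e1 by (simp add: algebra_simps)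
    also have "\<dots> \<le> s * y (\<xi> - 1) * s powr (\<xi> - 1) * s"
      using ydec[OF that] s1 by (intro mult_right_mono mult_left_mono) auto
    also have "\<dots> = k * w (\<xi> - 1)" unfolding w_def ss[symmetric] by (simp add: algebra_simps)
    finally have "s * (k * w \<xi>) \<le> k * w (\<xi> - 1)" .
    moreover have "1 * (k * w \<xi>) \<le> s * (k * w \<xi>)" using s1 w0[of \<xi>] assms(4)
      by (intro mult_right_mono) auto
    ultimately have "k * w \<xi> \<le> k * w (\<xi> - 1)" by linarith
    thus ?thesis using assms(4) by simp
  qed
  define M where "M = s powr \<xi>a"
  have wleft: "w \<xi> \<le> M" if "\<xi> \<le> \<xi>a" for \<xi>
  proof -
    have "y \<xi> \<le> 1" using P0[of \<xi>] unfolding y_def by simp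
    moreover have "s powr \<xi> \<le> s powr \<xi>a" using s1 that by (intro powr_mono) auto
    ultimately show ?thesis unfolding w_def M_def
      using mult_mono[of "y \<xi>" 1 "s powr \<xi>" "s powr \<xi>a"] y0[of \<xi>] by simp
  qed
  have wind: "\<forall>\<xi>. \<xi> \<le> \<xi>a + real n \<longrightarrow> w \<xi> \<le> M" for n
  proof (induction n)
    case 0 thus ?case using wleft by simp
  next
    case (Suc n)
    show ?case
    proof (intro allI impI)
      fix \<xi> assume h: "\<xi> \<le> \<xi>a + real (Suc n)"
      show "w \<xi> \<le> M"
      proof (cases "\<xi> \<le> \<xi>a")
        case True thus ?thesis using wleft by simp
      next
        case False
        hence "w \<xi> \<le> w (\<xi> - 1)" using wstep by simp
        moreover have "\<xi> - 1 \<le> \<xi>a + real n" using h by simp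
        ultimately show ?thesis using Suc.IH by fastforce
      qed
    qed
  qed
  have wM: "w \<xi> \<le> M" for \<xi>
  proof -
    have "\<xi> - \<xi>a \<le> real (nat \<lceil>\<xi> - \<xi>a\<rceil>)" by (rule real_nat_ceiling_ge)
    hence "\<xi> \<le> \<xi>a + real (nat \<lceil>\<xi> - \<xi>a\<rceil>)" by linarith
    thus ?thesis using wind[of "nat \<lceil>\<xi> - \<xi>a\<rceil>"] by blast
  qed
  have bddw: "bdd_above (range w)" using wM by (intro bdd_aboveI2) auto
  define S where "S = (SUP \<xi>. w \<xi>)"
  have wS: "w \<xi> \<le> S" for \<xi> unfolding S_def using bddw by (intro cSup_upper) auto
  have wb: "\<beta> * w \<xi> \<le> 2 * s * S" for \<xi>
  proof -
    have "\<beta> * w \<xi> = (\<beta> * y \<xi>) * s powr \<xi>" unfolding w_def by simp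
    also have "\<dots> \<le> (k * y (\<xi> + 1) + y (\<xi> - 1)) * s powr \<xi>"
      using main[of \<xi>] by (intro mult_right_mono) auto
    also have "\<dots> = s * w (\<xi> + 1) + s * w (\<xi> - 1)"
      unfolding w_def spow using spow[of "\<xi> - 1"] ss[symmetric] by (simp add: algebra_simps)
    also have "\<dots> \<le> s * S + s * S"
      using wS[of "\<xi> + 1"] wS[of "\<xi> - 1"] s1 by (intro add_mono mult_left_mono) auto
    finally show ?thesis by (simp add: algebra_simps)
  qed
  have \<beta>pos: "\<beta> > 0" using \<beta>_gt s1 by simp
  have "S \<le> 2 * s * S / \<beta>"
    unfolding S_def using wb \<beta>pos by (intro cSUP_least) (auto simp: pos_le_divide_eq mult.commute S_def)
  hence "\<beta> * S \<le> 2 * s * S" using \<beta>pos by (simp add: pos_le_divide_eq mult.commute)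
  moreover have "S \<ge> 0" using wS[of 0] w0[of 0] by simp
  ultimately have "(\<beta> - 2 * s) * S \<le> 0" by (simp add: algebra_simps)
  hence "S \<le> 0" using \<beta>_gt by (simp add: mult_le_0_iff)
  hence "w \<xi> \<le> 0" for \<xi> using wS[of \<xi>] by simp
  hence "y \<xi> \<le> 0" for \<xi> using s1 unfolding w_def by (simp add: mult_le_0_iff)
  hence P1': "\<Phi> \<xi> \<ge> 1" for \<xi> unfolding y_def by simp
  obtain x where "\<Phi> x < 1"
    using order_tendstoD(2)[OF lim0, of 1] unfolding eventually_at_bot_linorder by auto
  thus False using P1'[of x] by simp
qed

end
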